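(* Let $X,X_H$ be real Hilbert spaces, $I_h^H\in\mathbb{L}(X;X_H)$, and $I_H^h\in\mathbb{L}(X_H;X)$ with $\mu I_H^h=(I_h^H)^*$ for some $\mu>0$. Let $F:X\to\mathbb{R}$ be Fréchet differentiable and $G:X\to\mathbb{R}\cup\{+\infty\}$ convex, proper, lower semicontinuous, and $x^k\in X$. Let $F_H:X_H\to\mathbb{R}$ be convex with $L_H$-Lipschitz gradient, $G_H^k:X_H\to\mathbb{R}\cup\{+\infty\}$ convex, proper, lower semicontinuous, and $\tau_H>0$ with $\epsilon:=2-\tau_HL_H>0$. Let $\zeta^{k,0}\in X_H$ satisfy the nonsmooth coherence condition $I_h^H\partial G(x^k)\subseteq\partial G_H^k(\zeta^{k,0})$. Define $w_H^k:=I_h^H\nabla F(x^k)-\nabla F_H(\zeta^{k,0})$, $F_H^k(\zeta):=F_H(\zeta)+\langle w_H^k,\zeta-\zeta^{k,0}\rangle$, and $\zeta^{k,j+1}:=\operatorname{prox}_{\tau_H G_H^k}(\zeta^{k,j}-\tau_H\nabla F_H^k(\zeta^{k,j}))$ for $j=0,\dots,m-1$. Let $d:=I_H^h(\zeta^{k,m}-\zeta^{k,0})$. Then $$\sup_{g\in\partial G(x^k)}\langle g+\nabla F(x^k),d\rangle\le-\frac{\epsilon}{2\mu\tau_H}\sum_{j=0}^{m-1}\|\zeta^{k,j+1}-\zeta^{k,j}\|^2\le 0.$$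
   Context: $I_h^H$ is called the restriction and $I_H^h$ the prolongation operator. $I_h^H\partial G(x^k):=\{I_h^Hg: g\in\partial G(x^k)\}$. The supremum over the empty set is $-\infty$. $\operatorname{prox}$ is the proximal operator. *)

theory Defs
  imports "HOL-Analysis.Analysis"
begin

text \<open>Extended-real-valued functions X -> R \<union> {+inf} are modelled as maps into ereal
  that never take the value -inf (part of properness).\<close>

definition econvex :: "('a::real_vector \<Rightarrow> ereal) \<Rightarrow> bool" where
  "econvex G \<longleftrightarrow> (\<forall>x y t. 0 < t \<and> t < 1 \<longrightarrow>
      G ((1 - t) *\<^sub>R x + t *\<^sub>R y) \<le> ereal (1 - t) * G x + ereal t * G y)"

definition eproper :: "('a \<Rightarrow> ereal) \<Rightarrow> bool" where
  "eproper G \<longleftrightarrow> (\<forall>x. G x \<noteq> -\<infinity>) \<and> (\<exists>x. G x < \<infinity>)"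

definition elsc :: "('a::topological_space \<Rightarrow> ereal) \<Rightarrow> bool" where
  "elsc G \<longleftrightarrow> (\<forall>x. G x \<le> Liminf (at x) G)"

definition subdiff :: "('a::real_inner \<Rightarrow> ereal) \<Rightarrow> 'a \<Rightarrow> 'a set" where
  "subdiff G x = {g. G x < \<infinity> \<and> (\<forall>y. G x + ereal (inner g (y - x)) \<le> G y)}"

definition prox :: "real \<Rightarrow> ('a::real_inner \<Rightarrow> ereal) \<Rightarrow> 'a \<Rightarrow> 'a" where
  "prox \<tau> G v = (THE u. \<forall>z. G u + ereal ((norm (u - v))\<^sup>2 / (2 * \<tau>))
                              \<le> G z + ereal ((norm (z - v))\<^sup>2 / (2 * \<tau>)))"

end

theory Submission
  imports Defs
begin

lemma line_deriv:
  fixes f :: "'a::real_inner \<Rightarrow> real"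
  assumes "\<And>z. (f has_derivative (\<lambda>h. inner (df z) h)) (at z)"
  shows "((\<lambda>t. f (a + t *\<^sub>R d)) has_real_derivative inner (df (a + t *\<^sub>R d)) d) (at t within S)"
proof -
  have l: "((\<lambda>t. a + t *\<^sub>R d) has_derivative (\<lambda>h. h *\<^sub>R d)) (at t within S)"
    by (auto intro!: derivative_eq_intros)
  have "((\<lambda>t. f (a + t *\<^sub>R d)) has_derivative (\<lambda>h. inner (df (a + t *\<^sub>R d)) (h *\<^sub>R d))) (at t within S)"
    using has_derivative_compose[OF l assms] by (simp add: o_def)
  then show ?thesis
    by (rule has_derivative_imp_has_field_derivative) (simp add: inner_scaleR_right)
qed

lemma descent:
  fixes f :: "'a::real_inner \<Rightarrow> real"
  assumes df: "\<And>z. (f has_derivative (\<lambda>h. inner (df z) h)) (at z)"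
    and lip: "\<And>a b. norm (df a - df b) \<le> L * norm (a - b)"
  shows "f u \<le> f z + inner (df z) (u - z) + L / 2 * (norm (u - z))\<^sup>2"
proof -
  define d where "d = u - z"
  define \<phi> where "\<phi> t = f (z + t *\<^sub>R d) - t * inner (df z) d - L * t\<^sup>2 * (norm d)\<^sup>2 / 2" for t
  have "\<phi> 0 \<ge> \<phi> 1"
  proof (rule DERIV_nonpos_imp_nonincreasing[where f=\<phi>])
    fix t :: real assume t: "0 \<le> t" "t \<le> 1"
    have D1: "((\<lambda>t. f (z + t *\<^sub>R d)) has_real_derivative inner (df (z + t *\<^sub>R d)) d) (at t)"
      by (rule line_deriv[OF df])
    have D: "(\<phi> has_real_derivative inner (df (z + t *\<^sub>R d)) d - inner (df z) d - L * t * (norm d)\<^sup>2) (at t)"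
      unfolding \<phi>_def[abs_def]
      by (rule D1 derivative_eq_intros refl | simp)+
    have "inner (df (z + t *\<^sub>R d)) d - inner (df z) d = inner (df (z + t *\<^sub>R d) - df z) d"
      by (simp add: inner_diff_left)
    also have "\<dots> \<le> norm (df (z + t *\<^sub>R d) - df z) * norm d"
      by (rule norm_cauchy_schwarz)
    also have "\<dots> \<le> L * norm (t *\<^sub>R d) * norm d"
      using lip[of "z + t *\<^sub>R d" z] by (simp add: mult_right_mono)
    also have "\<dots> = L * t * (norm d)\<^sup>2" using t by (simp add: power2_eq_square)
    finally show "\<exists>y. (\<phi> has_real_derivative y) (at t) \<and> y \<le> 0" using D by force
  qed simp
  then show ?thesis unfolding \<phi>_def d_def by (simp add: algebra_simps)
qed

lemma convex_grad:
  fixes f :: "'a::real_inner \<Rightarrow> real"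
  assumes cv: "convex_on UNIV f"
    and df: "\<And>z. (f has_derivative (\<lambda>h. inner (df z) h)) (at z)"
  shows "f y \<ge> f x + inner (df x) (y - x)"
proof -
  define h where "h t = f (x + t *\<^sub>R (y - x))" for t :: real
  have ch: "convex_on UNIV h"
  proof (rule convex_onI)
    fix t a b :: real assume t: "0 < t" "t < 1"
    have "x + ((1 - t) * a + t * b) *\<^sub>R (y - x) = (1 - t) *\<^sub>R (x + a *\<^sub>R (y - x)) + t *\<^sub>R (x + b *\<^sub>R (y - x))"
      by (simp add: algebra_simps)
    then show "h ((1 - t) *\<^sub>R a + t *\<^sub>R b) \<le> (1 - t) * h a + t * h b"
      unfolding h_def using convex_onD[OF cv, of t "x + a *\<^sub>R (y - x)" "x + b *\<^sub>R (y - x)"] t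
      by simp
  qed simp
  have "(h has_real_derivative inner (df x) (y - x)) (at 0 within UNIV)"
    unfolding h_def[abs_def] using line_deriv[OF df, of x "y - x" 0 UNIV] by simp
  from convex_on_imp_above_tangent[OF ch _ _ _ this, of 1]
  show ?thesis unfolding h_def by simp
qed

lemma econvex_mid:
  assumes "econvex G" "G a = ereal ga" "G b = ereal gb"
  shows "G ((1/2) *\<^sub>R a + (1/2) *\<^sub>R b) \<le> ereal ((ga + gb) / 2)"
proof -
  have "G ((1 - 1/2) *\<^sub>R a + (1/2) *\<^sub>R b) \<le> ereal (1 - 1/2) * G a + ereal (1/2) * G b"
    using assms(1) unfolding econvex_def by (metis field_sum_of_halves half_gt_zero less_add_same_cancel1 zero_less_one)
  then show ?thesis using assms by (simp add: add_divide_distrib)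
qed

lemma par_mid:
  fixes a b v :: "'a::real_inner"
  shows "(norm ((1/2) *\<^sub>R a + (1/2) *\<^sub>R b - v))\<^sup>2 = ((norm (a - v))\<^sup>2 + (norm (b - v))\<^sup>2) / 2 - (norm (a - b))\<^sup>2 / 4"
  unfolding power2_norm_eq_inner
  by (simp add: inner_diff_left inner_diff_right inner_add_left inner_add_right inner_commute field_simps)

lemma prox_opt:
  fixes G :: "'a::real_inner \<Rightarrow> ereal"
  assumes cv: "econvex G" and tau: "\<tau> > 0"
    and mn: "\<And>z. G u + ereal ((norm (u - v))\<^sup>2 / (2 * \<tau>)) \<le> G z + ereal ((norm (z - v))\<^sup>2 / (2 * \<tau>))"
    and gu: "G u = ereal gu"
  shows "G u + ereal (inner ((1/\<tau>) *\<^sub>R (v - u)) (y - u)) \<le> G y"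
proof (cases "G y")
  case PInf then show ?thesis by simp
next
  case MInf
  have "G u + ereal ((norm (u - v))\<^sup>2 / (2 * \<tau>)) \<le> G y + ereal ((norm (y - v))\<^sup>2 / (2 * \<tau>))" by (rule mn)
  then show ?thesis using MInf gu by simp
next
  case (real gy)
  define K where "K = (norm (y - u))\<^sup>2 / (2 * \<tau>)"
  define I where "I = inner ((1/\<tau>) *\<^sub>R (v - u)) (y - u)"
  have key: "gu + I \<le> gy + t * K" if t: "0 < t" "t < 1" for t
  proof -
    define z where "z = (1 - t) *\<^sub>R u + t *\<^sub>R y"
    have "G z \<le> ereal (1 - t) * G u + ereal t * G y"
      using cv t unfolding econvex_def z_def by blast
    also have "\<dots> = ereal ((1 - t) * gu + t * gy)" using gu real by simp
    finally have Gz: "G z \<le> ereal ((1 - t) * gu + t * gy)" .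
    have "ereal (gu + (norm (u - v))\<^sup>2 / (2 * \<tau>)) \<le> G z + ereal ((norm (z - v))\<^sup>2 / (2 * \<tau>))"
      using mn[of z] gu by simp
    also have "\<dots> \<le> ereal ((1 - t) * gu + t * gy) + ereal ((norm (z - v))\<^sup>2 / (2 * \<tau>))"
      using Gz by (rule add_right_mono)
    finally have r: "gu + (norm (u - v))\<^sup>2 / (2 * \<tau>) \<le> (1 - t) * gu + t * gy + (norm (z - v))\<^sup>2 / (2 * \<tau>)"
      by simp
    have zv: "z - v = (u - v) + t *\<^sub>R (y - u)" unfolding z_def by (simp add: algebra_simps)
    have nz: "(norm (z - v))\<^sup>2 = (norm (u - v))\<^sup>2 + 2 * t * inner (u - v) (y - u) + t\<^sup>2 * (norm (y - u))\<^sup>2"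
      unfolding zv power2_norm_eq_inner
      by (simp add: inner_add_left inner_add_right inner_commute power2_eq_square algebra_simps)
    have I: "I = - inner (u - v) (y - u) / \<tau>"
      unfolding I_def using tau by (simp add: inner_diff_left inner_diff_right field_simps)
    have dd: "(norm (z - v))\<^sup>2 / (2 * \<tau>) - (norm (u - v))\<^sup>2 / (2 * \<tau>) = (2 * t * inner (u - v) (y - u) + t\<^sup>2 * (norm (y - u))\<^sup>2) / (2 * \<tau>)"
      unfolding nz by (simp add: diff_divide_distrib[symmetric])
    from r dd have "t * gu \<le> t * gy + (2 * t * inner (u - v) (y - u) + t\<^sup>2 * (norm (y - u))\<^sup>2) / (2 * \<tau>)"
      by (simp add: algebra_simps)
    moreover have "(2 * t * inner (u - v) (y - u) + t\<^sup>2 * (norm (y - u))\<^sup>2) / (2 * \<tau>) = t * inner (u - v) (y - u) / \<tau> + t * (t * K)"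
      using tau unfolding K_def by (simp add: field_simps power2_eq_square)
    moreover have "t * I = - (t * inner (u - v) (y - u) / \<tau>)" unfolding I by simp
    ultimately have "t * (gu + I) \<le> t * (gy + t * K)"
      by (simp add: algebra_simps)
    then show ?thesis using t by simp
  qed
  have Kn: "K \<ge> 0" unfolding K_def using tau by simp
  have "gu + I \<le> gy"
  proof (rule ccontr)
    assume "\<not> ?thesis"
    then have d: "gu + I - gy > 0" by simp
    define t where "t = min (1/2) ((gu + I - gy) / (2 * (K + 1)))"
    have t0: "0 < t" "t < 1" unfolding t_def using d Kn by auto
    have "t * K \<le> (gu + I - gy) / (2 * (K + 1)) * K"
      unfolding t_def using Kn by (intro mult_right_mono) auto
    also have "\<dots> < gu + I - gy"
    proof -
      have "(K + 2) * gy < (K + 2) * (I + gu)" using d Kn by (intro mult_strict_left_mono) auto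
      then show ?thesis using Kn by (simp add: field_simps)
    qed
    finally show False using key[OF t0] by simp
  qed
  then show ?thesis using gu real unfolding I_def by simp
qed


lemma quad_lb:
  fixes \<tau> n s :: real assumes "\<tau> > 0"
  shows "- (n * s) + s\<^sup>2 / (2 * \<tau>) \<ge> - (\<tau> * n\<^sup>2 / 2)"
proof -
  have "0 \<le> (s - \<tau> * n)\<^sup>2" by simp
  then have "0 \<le> s\<^sup>2 - 2 * \<tau> * n * s + \<tau>\<^sup>2 * n\<^sup>2" by (simp add: power2_eq_square algebra_simps)
  then show ?thesis using assms by (simp add: field_simps power2_eq_square)
qed

lemma lsc_eventually:
  assumes lsc: "elsc G" and lt: "c < G u"
  shows "eventually (\<lambda>y. c < G y) (nhds u)"
proof -
  have "c < Liminf (at u) G" using lsc lt unfolding elsc_def by (meson less_le_trans)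
  then have "eventually (\<lambda>y. c < G y) (at u)"
    using le_Liminf_iff[of "Liminf (at u) G" "at u" G] by auto
  then show ?thesis using lt unfolding eventually_at_filter by (auto elim: eventually_mono)
qed

lemma prox_exists:
  fixes G :: "'a::{real_inner,complete_space} \<Rightarrow> ereal"
  assumes cv: "econvex G" and nm: "\<And>x. G x \<noteq> -\<infinity>" and lsc: "elsc G" and tau: "\<tau> > 0"
    and ga: "G a = ereal ga0" and aff: "\<And>y. G a + ereal (inner c (y - a)) \<le> G y"
  shows "\<exists>u. \<forall>z. G u + ereal ((norm (u - v))\<^sup>2 / (2 * \<tau>)) \<le> G z + ereal ((norm (z - v))\<^sup>2 / (2 * \<tau>))"
proof -
  define q where "q z = (norm (z - v))\<^sup>2 / (2 * \<tau>)" for z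
  define \<Phi> where "\<Phi> z = G z + ereal (q z)" for z
  define B where "B = ga0 + inner c (v - a) - \<tau> * (norm c)\<^sup>2 / 2"
  have lb: "ereal B \<le> \<Phi> z" for z
  proof (cases "G z")
    case (real gz)
    have "G a + ereal (inner c (z - a)) \<le> G z" by (rule aff)
    then have g1: "ga0 + inner c (z - a) \<le> gz" using ga real by simp
    have "inner c (z - a) = inner c (z - v) + inner c (v - a)" by (simp add: inner_diff_right)
    moreover have "inner c (z - v) \<ge> - (norm c * norm (z - v))"
      using norm_cauchy_schwarz[of "-c" "z - v"] by simp
    moreover have "- (norm c * norm (z - v)) + (norm (z - v))\<^sup>2 / (2 * \<tau>) \<ge> - (\<tau> * (norm c)\<^sup>2 / 2)"
      by (rule quad_lb[OF tau])
    ultimately have "B \<le> gz + q z" using g1 unfolding B_def q_def by linarith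
    then show ?thesis unfolding \<Phi>_def using real by simp
  qed (auto simp: \<Phi>_def nm)
  define M where "M = (INF z. \<Phi> z)"
  have MB: "ereal B \<le> M" unfolding M_def by (rule INF_greatest) (rule lb)
  have Ma: "M \<le> ereal (ga0 + q a)" unfolding M_def using INF_lower[of a UNIV \<Phi>] ga by (simp add: \<Phi>_def)
  obtain mr where mr: "M = ereal mr" using MB Ma by (cases M) auto
  have Mle: "ereal mr \<le> \<Phi> z" for z using INF_lower[of z UNIV \<Phi>] mr unfolding M_def by simp
  have "\<exists>z. \<Phi> z < ereal (mr + inverse (real (Suc n)))" for n
  proof -
    have "M < ereal (mr + inverse (real (Suc n)))" using mr by simp
    then show ?thesis unfolding M_def by (simp add: INF_less_iff)
  qed
  then obtain x where x: "\<And>n. \<Phi> (x n) < ereal (mr + inverse (real (Suc n)))" by metis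
  define gx where "gx n = real_of_ereal (G (x n))" for n
  have Gx: "G (x n) = ereal (gx n)" for n
  proof -
    have "G (x n) \<noteq> \<infinity>" using x[of n] unfolding \<Phi>_def by auto
    then show ?thesis unfolding gx_def using nm[of "x n"] by (cases "G (x n)") auto
  qed
  define p where "p n = gx n + q (x n)" for n
  have p1: "mr \<le> p n" for n using Mle[of "x n"] Gx unfolding \<Phi>_def p_def by simp
  have p2: "p n < mr + inverse (real (Suc n))" for n using x[of n] Gx unfolding \<Phi>_def p_def by simp
  have cd: "(norm (x n - x k))\<^sup>2 \<le> 4 * \<tau> * (inverse (real (Suc n)) + inverse (real (Suc k)))" for n k
  proof -
    define md where "md = (1/2) *\<^sub>R x n + (1/2) *\<^sub>R x k"
    have Gm: "G md \<le> ereal ((gx n + gx k) / 2)" unfolding md_def by (rule econvex_mid[OF cv Gx Gx])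
    have qm: "q md = (q (x n) + q (x k)) / 2 - (norm (x n - x k))\<^sup>2 / (8 * \<tau>)"
      unfolding q_def md_def par_mid using tau by (simp add: field_simps)
    have "ereal mr \<le> G md + ereal (q md)" using Mle[of md] unfolding \<Phi>_def .
    also have "\<dots> \<le> ereal ((gx n + gx k) / 2) + ereal (q md)" using Gm by (rule add_right_mono)
    finally have "mr \<le> (gx n + gx k) / 2 + q md" by simp
    then have "(norm (x n - x k))\<^sup>2 / (8 * \<tau>) \<le> (p n - mr + (p k - mr)) / 2"
      unfolding qm p_def by (simp add: field_simps)
    then have "(norm (x n - x k))\<^sup>2 \<le> 4 * \<tau> * (p n - mr + (p k - mr))"
      using tau by (simp add: field_simps)
    also have "\<dots> \<le> 4 * \<tau> * (inverse (real (Suc n)) + inverse (real (Suc k)))"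
      using p2[of n] p2[of k] tau by (intro mult_left_mono) auto
    finally show ?thesis .
  qed
  have "Cauchy x"
  proof (rule CauchyI)
    fix e :: real assume e: "0 < e"
    obtain N where N: "inverse (real (Suc N)) < e\<^sup>2 / (8 * \<tau>)"
      using reals_Archimedean[of "e\<^sup>2 / (8 * \<tau>)"] e tau by auto
    show "\<exists>M. \<forall>m\<ge>M. \<forall>n\<ge>M. norm (x m - x n) < e"
    proof (intro exI allI impI)
      fix m n assume mn: "N \<le> m" "N \<le> n"
      have i1: "inverse (real (Suc m)) \<le> inverse (real (Suc N))" using mn by (simp add: field_simps)
      have i2: "inverse (real (Suc n)) \<le> inverse (real (Suc N))" using mn by (simp add: field_simps)
      have i3: "inverse (real (Suc m)) + inverse (real (Suc n)) \<le> 2 * inverse (real (Suc N))" using i1 i2 by linarith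
      have "(norm (x m - x n))\<^sup>2 \<le> 4 * \<tau> * (inverse (real (Suc m)) + inverse (real (Suc n)))" by (rule cd)
      also have "\<dots> \<le> 4 * \<tau> * (2 * inverse (real (Suc N)))" using i3 tau by (intro mult_left_mono) auto
      also have "\<dots> < 4 * \<tau> * (2 * (e\<^sup>2 / (8 * \<tau>)))" using N tau by (intro mult_strict_left_mono) auto
      also have "\<dots> = e\<^sup>2" using tau by simp
      finally show "norm (x m - x n) < e" using e by (meson power_less_imp_less_base less_le_not_le)
    qed
  qed
  then obtain u where xu: "x \<longlonglongrightarrow> u" unfolding Cauchy_convergent_iff convergent_def by blast
  have "\<Phi> u \<le> ereal mr"
  proof (rule ccontr)
    assume "\<not> ?thesis"
    then have lt: "ereal mr < \<Phi> u" by simp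
    obtain e where e: "e > 0" "ereal (mr - q u + e) < G u"
    proof (cases "G u")
      case (real gu)
      then show ?thesis using lt unfolding \<Phi>_def by (intro that[of "(gu + q u - mr) / 2"]) (auto simp: field_simps)
    next
      case PInf then show ?thesis by (intro that[of 1]) auto
    qed (use nm in auto)
    have "ereal (mr - q u + e / 2) < G u" using e order.strict_trans[of "ereal (mr - q u + e / 2)" "ereal (mr - q u + e)"] by simp
    from lsc_eventually[OF lsc this] have ev1: "eventually (\<lambda>n. ereal (mr - q u + e / 2) < G (x n)) sequentially"
      using xu unfolding tendsto_def filterlim_iff by blast
    have "(\<lambda>n. q (x n)) \<longlonglongrightarrow> q u" unfolding q_def using tau by (intro tendsto_intros xu) auto
    then have ev2: "eventually (\<lambda>n. q u - e / 4 < q (x n)) sequentially"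
      using e by (intro order_tendstoD(1)) auto
    have ev3: "eventually (\<lambda>n. inverse (real (Suc n)) < e / 4) sequentially"
      using e by (intro order_tendstoD(2)[OF LIMSEQ_inverse_real_of_nat]) auto
    from eventually_conj[OF ev1 eventually_conj[OF ev2 ev3]] obtain n where
      "ereal (mr - q u + e / 2) < G (x n)" "q u - e / 4 < q (x n)" "inverse (real (Suc n)) < e / 4"
      by (auto simp: eventually_sequentially)
    then show False using p2[of n] Gx[of n] unfolding p_def by simp
  qed
  then show ?thesis using Mle unfolding \<Phi>_def q_def by (meson order.trans)
qed


lemma prox_props:
  fixes G :: "'a::{real_inner,complete_space} \<Rightarrow> ereal"
  assumes cv: "econvex G" and nm: "\<And>x. G x \<noteq> -\<infinity>" and lsc: "elsc G" and tau: "\<tau> > 0"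
    and ga: "G a = ereal ga0" and aff: "\<And>y. G a + ereal (inner c (y - a)) \<le> G y"
  shows "\<exists>gu. G (prox \<tau> G v) = ereal gu \<and>
     (\<forall>y. G (prox \<tau> G v) + ereal (inner ((1/\<tau>) *\<^sub>R (v - prox \<tau> G v)) (y - prox \<tau> G v)) \<le> G y)"
proof -
  define P where "P u = (\<forall>z. G u + ereal ((norm (u - v))\<^sup>2 / (2 * \<tau>)) \<le> G z + ereal ((norm (z - v))\<^sup>2 / (2 * \<tau>)))" for u
  have fin: "\<exists>gu. G u = ereal gu" if "P u" for u
  proof -
    have "G u + ereal ((norm (u - v))\<^sup>2 / (2 * \<tau>)) \<le> G a + ereal ((norm (a - v))\<^sup>2 / (2 * \<tau>))"
      using that unfolding P_def by blast
    then have "G u \<noteq> \<infinity>" using ga by auto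
    then show ?thesis using nm[of u] by (cases "G u") auto
  qed
  have sub: "G u + ereal (inner ((1/\<tau>) *\<^sub>R (v - u)) (y - u)) \<le> G y" if "P u" for u y
    using fin[OF that] prox_opt[OF cv tau, of u v] that unfolding P_def by blast
  obtain u0 where u0: "P u0" using prox_exists[OF cv nm lsc tau ga aff, of v] unfolding P_def by blast
  have uniq: "u1 = u0" if P1: "P u1" for u1
  proof -
    obtain g1 where g1: "G u1 = ereal g1" using fin[OF P1] by blast
    obtain g0 where g0: "G u0 = ereal g0" using fin[OF u0] by blast
    have a1: "g1 + inner ((1/\<tau>) *\<^sub>R (v - u1)) (u0 - u1) \<le> g0" using sub[OF P1, of u0] g1 g0 by simp
    have a0: "g0 + inner ((1/\<tau>) *\<^sub>R (v - u0)) (u1 - u0) \<le> g1" using sub[OF u0, of u1] g1 g0 by simp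
    have "inner ((1/\<tau>) *\<^sub>R (v - u1)) (u0 - u1) + inner ((1/\<tau>) *\<^sub>R (v - u0)) (u1 - u0)
          = (1/\<tau>) * inner (u0 - u1) (u0 - u1)"
      by (simp add: inner_diff_left inner_diff_right inner_commute algebra_simps)
    then have "(1/\<tau>) * inner (u0 - u1) (u0 - u1) \<le> 0" using a0 a1 by linarith
    then have "inner (u0 - u1) (u0 - u1) \<le> 0" using tau by (simp add: divide_le_0_iff)
    then have "inner (u0 - u1) (u0 - u1) = 0" using inner_ge_zero[of "u0 - u1"] by linarith
    then show ?thesis by simp
  qed
  have "(THE u. P u) = u0" by (rule the_equality) (use u0 uniq in blast)+
  then have "prox \<tau> G v = u0" unfolding prox_def P_def by simp
  then show ?thesis using fin[OF u0] sub[OF u0] by auto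
qed


theorem mainTheorem2:
  fixes R :: "'x::{real_inner,complete_space} \<Rightarrow> 'h::{real_inner,complete_space}"
    and P :: "'h \<Rightarrow> 'x"
    and \<mu> :: real
    and F :: "'x \<Rightarrow> real" and gradF :: "'x \<Rightarrow> 'x"
    and G :: "'x \<Rightarrow> ereal" and xk :: 'x
    and FH :: "'h \<Rightarrow> real" and gradFH :: "'h \<Rightarrow> 'h" and LH :: real
    and GHk :: "'h \<Rightarrow> ereal" and \<tau>H :: real
    and \<zeta> :: "nat \<Rightarrow> 'h" and m :: nat
  assumes R_lin: "bounded_linear R"
    and P_lin: "bounded_linear P"
    and mu_pos: "\<mu> > 0"
    and adj: "\<And>x y. inner (R x) y = inner x (\<mu> *\<^sub>R P y)"
    and F_diff: "\<And>x. (F has_derivative (\<lambda>h. inner (gradF x) h)) (at x)"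
    and G_convex: "econvex G" and G_proper: "eproper G" and G_lsc: "elsc G"
    and FH_convex: "convex_on UNIV FH"
    and FH_diff: "\<And>z. (FH has_derivative (\<lambda>h. inner (gradFH z) h)) (at z)"
    and LH_nonneg: "LH \<ge> 0"
    and FH_lip: "\<And>a b. norm (gradFH a - gradFH b) \<le> LH * norm (a - b)"
    and GH_convex: "econvex GHk" and GH_proper: "eproper GHk" and GH_lsc: "elsc GHk"
    and tau_pos: "\<tau>H > 0"
    and eps_pos: "2 - \<tau>H * LH > 0"
    and coherence: "R ` subdiff G xk \<subseteq> subdiff GHk (\<zeta> 0)"
    and iter: "\<And>j. j < m \<Longrightarrow>
       \<zeta> (Suc j) = prox \<tau>H GHk (\<zeta> j - \<tau>H *\<^sub>R
          (gradFH (\<zeta> j) + (R (gradF xk) - gradFH (\<zeta> 0))))"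
  shows "(SUP g\<in>subdiff G xk. ereal (inner (g + gradF xk) (P (\<zeta> m - \<zeta> 0))))
           \<le> ereal (- ((2 - \<tau>H * LH) / (2 * \<mu> * \<tau>H))
                      * (\<Sum>j<m. (norm (\<zeta> (Suc j) - \<zeta> j))\<^sup>2))
       \<and> - ((2 - \<tau>H * LH) / (2 * \<mu> * \<tau>H)) * (\<Sum>j<m. (norm (\<zeta> (Suc j) - \<zeta> j))\<^sup>2) \<le> 0"
proof -
  let ?c = "(2 - \<tau>H * LH) / (2 * \<mu> * \<tau>H)"
  let ?S = "\<Sum>j<m. (norm (\<zeta> (Suc j) - \<zeta> j))\<^sup>2"
  have S0: "?S \<ge> 0" by (intro sum_nonneg) simp
  have c0: "?c > 0" using eps_pos mu_pos tau_pos by simp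
  have nmH: "\<And>x. GHk x \<noteq> -\<infinity>" using GH_proper unfolding eproper_def by blast
  have cS: "?c * ?S \<ge> 0" by (rule mult_nonneg_nonneg) (use c0 S0 in auto)
  have part2: "- ?c * ?S \<le> 0" using cS by (subst mult_minus_left) linarith
  have part1: "ereal (inner (g + gradF xk) (P (\<zeta> m - \<zeta> 0))) \<le> ereal (- ?c * ?S)"
    if g: "g \<in> subdiff G xk" for g
  proof -
    have Rg: "R g \<in> subdiff GHk (\<zeta> 0)" using coherence g by blast
    then have G0lt: "GHk (\<zeta> 0) < \<infinity>" and aff: "\<And>y. GHk (\<zeta> 0) + ereal (inner (R g) (y - \<zeta> 0)) \<le> GHk y"
      unfolding subdiff_def by auto
    obtain g0 where g0: "GHk (\<zeta> 0) = ereal g0" using G0lt nmH[of "\<zeta> 0"] by (cases "GHk (\<zeta> 0)") auto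
    define w where "w = R (gradF xk) - gradFH (\<zeta> 0)"
    define fk where "fk z = FH z + inner w (z - \<zeta> 0)" for z
    define dfk where "dfk z = gradFH z + w" for z
    have fkd: "(fk has_derivative (\<lambda>h. inner (dfk z) h)) (at z)" for z
      unfolding fk_def[abs_def] dfk_def
      by (rule derivative_eq_intros FH_diff refl | simp add: inner_add_left)+
    have lipk: "norm (dfk a - dfk b) \<le> LH * norm (a - b)" for a b
      unfolding dfk_def using FH_lip[of a b] by simp
    have it: "\<zeta> (Suc j) = prox \<tau>H GHk (\<zeta> j - \<tau>H *\<^sub>R dfk (\<zeta> j))" if "j < m" for j
      using iter[OF that] unfolding dfk_def w_def .
    have pp: "\<exists>gu. GHk (\<zeta> (Suc j)) = ereal gu \<and>
       (\<forall>y. GHk (\<zeta> (Suc j)) + ereal (inner ((1/\<tau>H) *\<^sub>R ((\<zeta> j - \<tau>H *\<^sub>R dfk (\<zeta> j)) - \<zeta> (Suc j))) (y - \<zeta> (Suc j))) \<le> GHk y)"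
      if "j < m" for j
      unfolding it[OF that] by (rule prox_props[OF GH_convex nmH GH_lsc tau_pos g0 aff])
    define gv where "gv j = real_of_ereal (GHk (\<zeta> j))" for j
    have fin: "GHk (\<zeta> j) = ereal (gv j)" if "j \<le> m" for j
    proof (cases j)
      case 0 then show ?thesis using g0 unfolding gv_def by simp
    next
      case (Suc i) then show ?thesis using pp[of i] that unfolding gv_def by auto
    qed
    have step: "fk (\<zeta> (Suc j)) + gv (Suc j) \<le> fk (\<zeta> j) + gv j - (2 - \<tau>H * LH) / (2 * \<tau>H) * (norm (\<zeta> (Suc j) - \<zeta> j))\<^sup>2"
      if j: "j < m" for j
    proof -
      define u where "u = \<zeta> (Suc j)"
      define z where "z = \<zeta> j"
      have "GHk u + ereal (inner ((1/\<tau>H) *\<^sub>R ((z - \<tau>H *\<^sub>R dfk z) - u)) (z - u)) \<le> GHk z"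
        using pp[OF j] unfolding u_def z_def by blast
      then have s1: "gv (Suc j) + inner ((1/\<tau>H) *\<^sub>R ((z - \<tau>H *\<^sub>R dfk z) - u)) (z - u) \<le> gv j"
        using fin[of j] fin[of "Suc j"] j unfolding u_def z_def by simp
      have e1: "inner ((1/\<tau>H) *\<^sub>R ((z - \<tau>H *\<^sub>R dfk z) - u)) (z - u) = (norm (u - z))\<^sup>2 / \<tau>H + inner (dfk z) (u - z)"
      proof -
        have "(1/\<tau>H) *\<^sub>R ((z - \<tau>H *\<^sub>R dfk z) - u) = (1/\<tau>H) *\<^sub>R (z - u) - dfk z"
          using tau_pos by (simp add: algebra_simps)
        then have "inner ((1/\<tau>H) *\<^sub>R ((z - \<tau>H *\<^sub>R dfk z) - u)) (z - u) = (1/\<tau>H) * inner (z - u) (z - u) - inner (dfk z) (z - u)"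
          by (simp add: inner_diff_left)
        also have "inner (z - u) (z - u) = (norm (u - z))\<^sup>2"
          by (simp add: power2_norm_eq_inner norm_minus_commute[of u z])
        also have "inner (dfk z) (z - u) = - inner (dfk z) (u - z)"
          by (simp add: inner_diff_right)
        finally show ?thesis by simp
      qed
      have s2: "fk u \<le> fk z + inner (dfk z) (u - z) + LH / 2 * (norm (u - z))\<^sup>2"
        by (rule descent[OF fkd lipk])
      have e2: "(2 - \<tau>H * LH) / (2 * \<tau>H) * (norm (u - z))\<^sup>2 = (norm (u - z))\<^sup>2 / \<tau>H - LH / 2 * (norm (u - z))\<^sup>2"
        using tau_pos by (simp add: field_simps)
      show ?thesis using s1 s2 e1 e2 unfolding u_def[symmetric] z_def[symmetric] by linarith
    qed
    have tel: "fk (\<zeta> n) + gv n \<le> fk (\<zeta> 0) + gv 0 - (2 - \<tau>H * LH) / (2 * \<tau>H) * (\<Sum>j<n. (norm (\<zeta> (Suc j) - \<zeta> j))\<^sup>2)"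
      if "n \<le> m" for n
      using that
    proof (induction n)
      case 0 then show ?case by simp
    next
      case (Suc n)
      then have "n < m" by simp
      from step[OF this] Suc.IH Suc.prems show ?case by (simp add: algebra_simps)
    qed
    have lowF: "fk (\<zeta> m) \<ge> fk (\<zeta> 0) + inner (R (gradF xk)) (\<zeta> m - \<zeta> 0)"
    proof -
      have "FH (\<zeta> m) \<ge> FH (\<zeta> 0) + inner (gradFH (\<zeta> 0)) (\<zeta> m - \<zeta> 0)"
        by (rule convex_grad[OF FH_convex FH_diff])
      then show ?thesis unfolding fk_def w_def by (simp add: inner_diff_left)
    qed
    have lowG: "gv m \<ge> gv 0 + inner (R g) (\<zeta> m - \<zeta> 0)"
      using aff[of "\<zeta> m"] fin[of m] fin[of 0] by simp
    have "inner (R g) (\<zeta> m - \<zeta> 0) + inner (R (gradF xk)) (\<zeta> m - \<zeta> 0) \<le> - ((2 - \<tau>H * LH) / (2 * \<tau>H) * ?S)"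
      using tel[of m] lowF lowG by simp
    moreover have "inner (R g) (\<zeta> m - \<zeta> 0) + inner (R (gradF xk)) (\<zeta> m - \<zeta> 0) = \<mu> * inner (g + gradF xk) (P (\<zeta> m - \<zeta> 0))"
      using adj[of g "\<zeta> m - \<zeta> 0"] adj[of "gradF xk" "\<zeta> m - \<zeta> 0"] by (simp add: inner_add_left algebra_simps)
    ultimately have H: "\<mu> * inner (g + gradF xk) (P (\<zeta> m - \<zeta> 0)) \<le> - ((2 - \<tau>H * LH) / (2 * \<tau>H) * ?S)"
      by linarith
    have "inner (g + gradF xk) (P (\<zeta> m - \<zeta> 0)) \<le> - ((2 - \<tau>H * LH) / (2 * \<tau>H) * ?S) / \<mu>"
    proof -
      have gen: "\<And>X B. \<mu> * X \<le> B \<Longrightarrow> X \<le> B / \<mu>" using mu_pos by (simp add: pos_le_divide_eq mult.commute)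
      show ?thesis by (rule gen[OF H])
    qed
    moreover have "- ((2 - \<tau>H * LH) / (2 * \<tau>H) * ?S) / \<mu> = - ?c * ?S"
      using mu_pos tau_pos by (simp add: field_simps)
    ultimately show ?thesis by (simp add: ac_simps)
  qed
  show ?thesis
    by (intro conjI SUP_least part1 part2)
qed

end
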